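(* For every integers $d \geq 2$ and $s \geq 1$, $$\mathsf U_{d,s} \subseteq \mathsf L_{d,s} \subseteq \mathsf B_d.$$ In particular, $$\overline{\bigcup_{s\geq 1}\mathsf L_{d,s}}=\mathsf B_d.$$
   Context: $\mathsf B_d$ is the set of $d\times d$ bistochastic matrices. For $U\in\mathcal U(ds)$ (unitary $ds\times ds$ matrices) viewed as a $d\times d$ block matrix with blocks $U_{ij}\in M_s(\mathbb C)$, $\phi_{d,s}(U)=\big(\tfrac1s\|U_{ij}\|_F^2\big)_{i,j=1}^d$ with $\|X\|_F=\operatorname{Tr}(XX^* )^{1/2}$, and $\mathsf U_{d,s}:=\phi_{d,s}(\mathcal U(ds))$. $\Delta_d$ is the probability simplex in $\mathbb R^d$. $\mathsf{Brac}_{d,s}$ is the set of $(\alpha,\beta)\in\Delta_d^2$ for which there exist $A_1,\dots,A_d,B_1,\dots,B_d\in M_s(\mathbb C)$ with $\sum_i A_iA_i^*=\sum_iB_iB_i^*=I_s$, $\sum_iA_iB_i^*=0$, $\tfrac1s\|A_i\|_F^2=\alpha_i$, $\tfrac1s\|B_i\|_F^2=\beta_i$ for all $i$. The set of generalized bracelet matrices $\mathsf L_{d,s}$ is the set of $B\in\mathsf B_d$ such that for all rows $i_1\ne i_2$, $(B_{i_1\cdot},B_{i_2\cdot})\in\mathsf{Brac}_{d,s}$ and for all columns $j_1\ne j_2$, $(B_{\cdot j_1},B_{\cdot j_2})\in\mathsf{Brac}_{d,s}$. *)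

theory Defs
  imports "HOL-Analysis.Analysis"
begin

text \<open>Conventions: a d-by-d real matrix is a function nat => nat => real whose
entries outside {0..<d} x {0..<d} are 0; a vector in R^d is nat => real, zero
outside {0..<d}. Complex matrices are nat => nat => complex, only entries with
indices in range are relevant. Topology: product topology on functions, which
on the extensional (zero-padded) matrices coincides with the Euclidean one.\<close>

definition bistochastic :: "nat \<Rightarrow> (nat \<Rightarrow> nat \<Rightarrow> real) set" where
  "bistochastic d = {B. (\<forall>i j. (d \<le> i \<or> d \<le> j) \<longrightarrow> B i j = 0)
      \<and> (\<forall>i<d. \<forall>j<d. 0 \<le> B i j)
      \<and> (\<forall>i<d. (\<Sum>j<d. B i j) = 1)
      \<and> (\<forall>j<d. (\<Sum>i<d. B i j) = 1)}"

definition prob_simplex :: "nat \<Rightarrow> (nat \<Rightarrow> real) set" where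
  "prob_simplex d = {a. (\<forall>i. d \<le> i \<longrightarrow> a i = 0) \<and> (\<forall>i<d. 0 \<le> a i) \<and> (\<Sum>i<d. a i) = 1}"

definition unitary_mat :: "nat \<Rightarrow> (nat \<Rightarrow> nat \<Rightarrow> complex) \<Rightarrow> bool" where
  "unitary_mat n U \<longleftrightarrow>
     (\<forall>i<n. \<forall>j<n. (\<Sum>k<n. U i k * cnj (U j k)) = (if i = j then 1 else 0)) \<and>
     (\<forall>i<n. \<forall>j<n. (\<Sum>k<n. cnj (U k i) * U k j) = (if i = j then 1 else 0))"

definition block_frob_sq :: "nat \<Rightarrow> (nat \<Rightarrow> nat \<Rightarrow> complex) \<Rightarrow> nat \<Rightarrow> nat \<Rightarrow> real" where
  "block_frob_sq s U i j = (\<Sum>a<s. \<Sum>b<s. (cmod (U (i * s + a) (j * s + b)))\<^sup>2)"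

definition phi :: "nat \<Rightarrow> nat \<Rightarrow> (nat \<Rightarrow> nat \<Rightarrow> complex) \<Rightarrow> (nat \<Rightarrow> nat \<Rightarrow> real)" where
  "phi d s U = (\<lambda>i j. if i < d \<and> j < d then block_frob_sq s U i j / real s else 0)"

definition U_set :: "nat \<Rightarrow> nat \<Rightarrow> (nat \<Rightarrow> nat \<Rightarrow> real) set" where
  "U_set d s = phi d s ` {U. unitary_mat (d * s) U}"

definition frob_sq :: "nat \<Rightarrow> (nat \<Rightarrow> nat \<Rightarrow> complex) \<Rightarrow> real" where
  "frob_sq s A = (\<Sum>a<s. \<Sum>b<s. (cmod (A a b))\<^sup>2)"

definition Brac :: "nat \<Rightarrow> nat \<Rightarrow> ((nat \<Rightarrow> real) \<times> (nat \<Rightarrow> real)) set" where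
  "Brac d s = {(\<alpha>, \<beta>). \<alpha> \<in> prob_simplex d \<and> \<beta> \<in> prob_simplex d \<and>
     (\<exists>A B :: nat \<Rightarrow> nat \<Rightarrow> nat \<Rightarrow> complex.
        (\<forall>a<s. \<forall>b<s. (\<Sum>i<d. \<Sum>k<s. A i a k * cnj (A i b k)) = (if a = b then 1 else 0)) \<and>
        (\<forall>a<s. \<forall>b<s. (\<Sum>i<d. \<Sum>k<s. B i a k * cnj (B i b k)) = (if a = b then 1 else 0)) \<and>
        (\<forall>a<s. \<forall>b<s. (\<Sum>i<d. \<Sum>k<s. A i a k * cnj (B i b k)) = 0) \<and>
        (\<forall>i<d. frob_sq s (A i) / real s = \<alpha> i) \<and>
        (\<forall>i<d. frob_sq s (B i) / real s = \<beta> i))}"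

definition L_set :: "nat \<Rightarrow> nat \<Rightarrow> (nat \<Rightarrow> nat \<Rightarrow> real) set" where
  "L_set d s = {B \<in> bistochastic d.
      (\<forall>i1<d. \<forall>i2<d. i1 \<noteq> i2 \<longrightarrow> ((\<lambda>j. B i1 j), (\<lambda>j. B i2 j)) \<in> Brac d s) \<and>
      (\<forall>j1<d. \<forall>j2<d. j1 \<noteq> j2 \<longrightarrow> ((\<lambda>i. B i j1), (\<lambda>i. B i j2)) \<in> Brac d s)}"

end

theory Submission
  imports Defs
begin


lemma dv: "a < (s::nat) \<Longrightarrow> (i * s + a) div s = i"
  by (simp add: add.commute)
lemma md: "a < (s::nat) \<Longrightarrow> (i * s + a) mod s = a"
  by (simp add: add.commute)
lemma sum_blocks: "(\<Sum>k<((d::nat) * s). f k) = (\<Sum>j<d. \<Sum>b<s. f (j * s+b))"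
proof -
  have "(\<Sum>k<(d * s). f k) = (\<Sum>j<d. sum f {j * s..<j * s+s})"
    using sum.nat_group[where g=f and k=s and n=d] by simp
  also have "\<dots> = (\<Sum>j<d. \<Sum>b<s. f (j * s+b))"
  proof (rule sum.cong[OF refl])
    fix j
    show "sum f {j * s..<j * s+s} = (\<Sum>b<s. f (j * s+b))"
      using sum.shift_bounds_nat_ivl[of f 0 "j * s" s]
      by (simp add: atLeast0LessThan add.commute)
  qed
  finally show ?thesis .
qed
lemma idx_lt: "i < d \<Longrightarrow> a < (s::nat) \<Longrightarrow> i * s+a < d * s"
proof -
  assume "i < d" "a < s"
  hence "i * s + a < i * s + s" by simp
  also have "\<dots> = Suc i * s" by simp
  also have "\<dots> \<le> d * s" using \<open>i<d\<close> by (intro mult_right_mono) auto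
  finally show ?thesis .
qed

lemma idx_inj: "a < (s::nat) \<Longrightarrow> b < s \<Longrightarrow> i1 * s+a = i2 * s+b \<Longrightarrow> i1 = i2 \<and> a = b"
proof -
  assume h: "a < s" "b < s" "i1 * s+a = i2 * s+b"
  have "i1 = (i1 * s+a) div s" using h(1) dv by simp
  also have "\<dots> = (i2 * s+b) div s" using h(3) by simp
  also have "\<dots> = i2" using h(2) dv by simp
  finally show ?thesis using h by simp
qed

lemma unit_rows: "unitary_mat n U \<Longrightarrow> p<n \<Longrightarrow> q<n \<Longrightarrow>
   (\<Sum>k<n. U p k * cnj (U q k)) = (if p = q then 1 else 0)"
  by (simp add: unitary_mat_def)

lemma unit_cols: "unitary_mat n U \<Longrightarrow> p<n \<Longrightarrow> q<n \<Longrightarrow>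
   (\<Sum>k<n. cnj (U k p) * U k q) = (if p = q then 1 else 0)"
  by (simp add: unitary_mat_def)

lemma row_norm: assumes "unitary_mat n U" "p<n" shows "(\<Sum>k<n. (cmod (U p k))\<^sup>2) = 1"
proof -
  have "complex_of_real (\<Sum>k<n. (cmod (U p k))\<^sup>2) = (\<Sum>k<n. U p k * cnj (U p k))"
    by (subst of_real_sum) (simp only: complex_norm_square)
  also have "\<dots> = 1" using unit_rows[OF assms assms(2)] by simp
  finally show ?thesis using of_real_eq_1_iff by blast
qed

lemma col_norm: assumes "unitary_mat n U" "p<n" shows "(\<Sum>k<n. (cmod (U k p))\<^sup>2) = 1"
proof -
  have "complex_of_real (\<Sum>k<n. (cmod (U k p))\<^sup>2) = (\<Sum>k<n. cnj (U k p) * U k p)"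
    by (subst of_real_sum) (simp only: complex_norm_square mult.commute)
  also have "\<dots> = 1" using unit_cols[OF assms assms(2)] by simp
  finally show ?thesis using of_real_eq_1_iff by blast
qed

lemma phi_bist:
  assumes U: "unitary_mat (d * s) U" and s: "1 \<le> s"
  shows "phi d s U \<in> bistochastic d"
proof -
  have rs: "(\<Sum>j<d. block_frob_sq s U i j) = real s" if "i<d" for i
  proof -
    have "(\<Sum>j<d. block_frob_sq s U i j) = (\<Sum>a<s. \<Sum>j<d. \<Sum>b<s. (cmod (U (i * s+a) (j * s+b)))\<^sup>2)"
      unfolding block_frob_sq_def by (rule sum.swap)
    also have "\<dots> = (\<Sum>a<s. (1::real))"
    proof (rule sum.cong[OF refl])
      fix a assume "a \<in> {..<s}"
      then have "i * s+a < d * s" using idx_lt that by simp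
      then show "(\<Sum>j<d. \<Sum>b<s. (cmod (U (i * s+a) (j * s+b)))\<^sup>2) = 1"
        using row_norm[OF U] sum_blocks[of "\<lambda>k. (cmod (U (i * s+a) k))\<^sup>2" d s] by simp
    qed
    finally show ?thesis by simp
  qed
  have cs: "(\<Sum>i<d. block_frob_sq s U i j) = real s" if "j<d" for j
  proof -
    have "(\<Sum>i<d. block_frob_sq s U i j) = (\<Sum>i<d. \<Sum>b<s. \<Sum>a<s. (cmod (U (i * s+a) (j * s+b)))\<^sup>2)"
      unfolding block_frob_sq_def by (rule sum.cong[OF refl], rule sum.swap)
    also have "\<dots> = (\<Sum>b<s. \<Sum>i<d. \<Sum>a<s. (cmod (U (i * s+a) (j * s+b)))\<^sup>2)"
      by (rule sum.swap)
    also have "\<dots> = (\<Sum>b<s. (1::real))"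
    proof (rule sum.cong[OF refl])
      fix b assume "b \<in> {..<s}"
      then have "j * s+b < d * s" using idx_lt that by simp
      then show "(\<Sum>i<d. \<Sum>a<s. (cmod (U (i * s+a) (j * s+b)))\<^sup>2) = 1"
        using col_norm[OF U] sum_blocks[of "\<lambda>k. (cmod (U k (j * s+b)))\<^sup>2" d s] by simp
    qed
    finally show ?thesis by simp
  qed
  have nn: "0 \<le> block_frob_sq s U i j" for i j
    unfolding block_frob_sq_def by (intro sum_nonneg) auto
  have "(\<Sum>j<d. phi d s U i j) = 1" if "i<d" for i
    using rs[OF that] s that by (simp add: phi_def flip: sum_divide_distrib)
  moreover have "(\<Sum>i<d. phi d s U i j) = 1" if "j<d" for j
    using cs[OF that] s that by (simp add: phi_def flip: sum_divide_distrib)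
  ultimately show ?thesis
    unfolding bistochastic_def using nn by (auto simp: phi_def)
qed


lemma rows_block:
  assumes U: "unitary_mat (d * s) U" and h: "i1<d" "i2<d" "a<s" "b<(s::nat)"
  shows "(\<Sum>j<d. \<Sum>k<s. U (i1 * s+a) (j * s+k) * cnj (U (i2 * s+b) (j * s+k)))
     = (if i1 = i2 \<and> a = b then 1 else 0)"
proof -
  have "(\<Sum>j<d. \<Sum>k<s. U (i1 * s+a) (j * s+k) * cnj (U (i2 * s+b) (j * s+k)))
     = (\<Sum>k<(d * s). U (i1 * s+a) k * cnj (U (i2 * s+b) k))"
    by (rule sum_blocks[symmetric])
  also have "\<dots> = (if i1 * s+a = i2 * s+b then 1 else 0)"
    using unit_rows[OF U idx_lt[OF h(1,3)] idx_lt[OF h(2,4)]] .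
  also have "\<dots> = (if i1 = i2 \<and> a = b then 1 else 0)"
    using idx_inj[OF h(3,4)] by auto
  finally show ?thesis .
qed

lemma cols_block:
  assumes U: "unitary_mat (d * s) U" and h: "j1<d" "j2<d" "a<s" "b<(s::nat)"
  shows "(\<Sum>i<d. \<Sum>k<s. cnj (U (i * s+k) (j1 * s+a)) * U (i * s+k) (j2 * s+b))
     = (if j1 = j2 \<and> a = b then 1 else 0)"
proof -
  have "(\<Sum>i<d. \<Sum>k<s. cnj (U (i * s+k) (j1 * s+a)) * U (i * s+k) (j2 * s+b))
     = (\<Sum>k<(d * s). cnj (U k (j1 * s+a)) * U k (j2 * s+b))"
    by (rule sum_blocks[symmetric])
  also have "\<dots> = (if j1 * s+a = j2 * s+b then 1 else 0)"
    using unit_cols[OF U idx_lt[OF h(1,3)] idx_lt[OF h(2,4)]] .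
  also have "\<dots> = (if j1 = j2 \<and> a = b then 1 else 0)"
    using idx_inj[OF h(3,4)] by auto
  finally show ?thesis .
qed

lemma bist_row: "B \<in> bistochastic d \<Longrightarrow> i < d \<Longrightarrow> (\<lambda>j. B i j) \<in> prob_simplex d"
  unfolding bistochastic_def prob_simplex_def by auto

lemma bist_col: "B \<in> bistochastic d \<Longrightarrow> j < d \<Longrightarrow> (\<lambda>i. B i j) \<in> prob_simplex d"
  unfolding bistochastic_def prob_simplex_def by auto

lemma U_sub_L:
  assumes s: "1 \<le> s"
  shows "U_set d s \<subseteq> L_set d s"
proof
  fix M assume "M \<in> U_set d s"
  then obtain U where U: "unitary_mat (d * s) U" and M: "M = phi d s U"
    unfolding U_set_def by auto
  have Mb: "M \<in> bistochastic d" using phi_bist[OF U s] M by simp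
  have rows: "((\<lambda>j. M i1 j), (\<lambda>j. M i2 j)) \<in> Brac d s"
    if h: "i1 < d" "i2 < d" "i1 \<noteq> i2" for i1 i2
  proof -
    define A where "A = (\<lambda>j a k. U (i1 * s+a) (j * s+k))"
    define B where "B = (\<lambda>j a k. U (i2 * s+a) (j * s+k))"
    have c1: "\<forall>a<s. \<forall>b<s. (\<Sum>i<d. \<Sum>k<s. A i a k * cnj (A i b k)) = (if a = b then 1 else 0)"
      unfolding A_def using rows_block[OF U h(1) h(1)] by simp
    have c2: "\<forall>a<s. \<forall>b<s. (\<Sum>i<d. \<Sum>k<s. B i a k * cnj (B i b k)) = (if a = b then 1 else 0)"
      unfolding B_def using rows_block[OF U h(2) h(2)] by simp
    have c3: "\<forall>a<s. \<forall>b<s. (\<Sum>i<d. \<Sum>k<s. A i a k * cnj (B i b k)) = 0"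
      unfolding A_def B_def using rows_block[OF U h(1) h(2)] h(3) by simp
    have c4: "\<forall>i<d. frob_sq s (A i) / real s = M i1 i"
      unfolding A_def M phi_def frob_sq_def block_frob_sq_def using h by simp
    have c5: "\<forall>i<d. frob_sq s (B i) / real s = M i2 i"
      unfolding B_def M phi_def frob_sq_def block_frob_sq_def using h by simp
    show ?thesis unfolding Brac_def mem_Collect_eq case_prod_conv
      apply (rule conjI, rule bist_row[OF Mb h(1)], rule conjI, rule bist_row[OF Mb h(2)])
      apply (rule exI[of _ A], rule exI[of _ B])
      using c1 c2 c3 c4 c5 by blast
  qed
  have cols: "((\<lambda>i. M i j1), (\<lambda>i. M i j2)) \<in> Brac d s"
    if h: "j1 < d" "j2 < d" "j1 \<noteq> j2" for j1 j2
  proof -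
    define A where "A = (\<lambda>i a k. cnj (U (i * s+k) (j1 * s+a)))"
    define B where "B = (\<lambda>i a k. cnj (U (i * s+k) (j2 * s+a)))"
    have c1: "\<forall>a<s. \<forall>b<s. (\<Sum>i<d. \<Sum>k<s. A i a k * cnj (A i b k)) = (if a = b then 1 else 0)"
      unfolding A_def using cols_block[OF U h(1) h(1)] by simp
    have c2: "\<forall>a<s. \<forall>b<s. (\<Sum>i<d. \<Sum>k<s. B i a k * cnj (B i b k)) = (if a = b then 1 else 0)"
      unfolding B_def using cols_block[OF U h(2) h(2)] by simp
    have c3: "\<forall>a<s. \<forall>b<s. (\<Sum>i<d. \<Sum>k<s. A i a k * cnj (B i b k)) = 0"
      unfolding A_def B_def using cols_block[OF U h(1) h(2)] h(3) by simp
    have frA: "frob_sq s (A i) = block_frob_sq s U i j1" for i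
      unfolding A_def frob_sq_def block_frob_sq_def by (subst sum.swap) simp
    have c4: "\<forall>i<d. frob_sq s (A i) / real s = M i j1"
      unfolding M phi_def frA using h by simp
    have frB: "frob_sq s (B i) = block_frob_sq s U i j2" for i
      unfolding B_def frob_sq_def block_frob_sq_def by (subst sum.swap) simp
    have c5: "\<forall>i<d. frob_sq s (B i) / real s = M i j2"
      unfolding M phi_def frB using h by simp
    show ?thesis unfolding Brac_def mem_Collect_eq case_prod_conv
      apply (rule conjI, rule bist_col[OF Mb h(1)], rule conjI, rule bist_col[OF Mb h(2)])
      apply (rule exI[of _ A], rule exI[of _ B])
      using c1 c2 c3 c4 c5 by blast
  qed
  show "M \<in> L_set d s" unfolding L_set_def using Mb rows cols by blast
qed



lemma sum_ind_card: "(\<Sum>a<(s::nat). if P a then (1::real) else 0) = real (card {a. a<s \<and> P a})"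
proof -
  have "{a. a<s \<and> P a} = {..<s} \<inter> {a. P a}" by auto
  then show ?thesis by (simp add: sum.If_cases)
qed

lemma perm_unitary:
  assumes bij: "bij_betw \<sigma> {..<n} {..<n}"
  shows "unitary_mat n (\<lambda>p q. if q = \<sigma> p then 1 else 0)"
proof -
  have inj: "inj_on \<sigma> {..<n}" using bij bij_betw_imp_inj_on by blast
  have img: "\<sigma> i < n" if "i < n" for i using bij that bij_betwE by blast
  define \<tau> where "\<tau> = inv_into {..<n} \<sigma>"
  have t1: "\<tau> i < n" if "i<n" for i
    using bij that unfolding \<tau>_def by (meson bij_betwE bij_betw_inv_into lessThan_iff)
  have t2: "\<sigma> (\<tau> i) = i" if "i<n" for i
    using bij that unfolding \<tau>_def by (meson bij_betw_inv_into_right lessThan_iff)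
  have t3: "(i = \<sigma> k) = (k = \<tau> i)" if "i<n" "k<n" for i k
    using bij that unfolding \<tau>_def by (metis bij_betw_inv_into_left lessThan_iff t2 \<tau>_def)
  have r: "(\<Sum>k<n. (if k = \<sigma> i then 1 else 0) * cnj (if k = \<sigma> j then 1 else 0)) = (if i = j then 1 else (0::complex))"
    if "i<n" "j<n" for i j
  proof -
    have "(\<Sum>k<n. (if k = \<sigma> i then 1 else 0) * cnj (if k = \<sigma> j then 1 else 0))
        = (\<Sum>k<n. if k = \<sigma> i then (if \<sigma> i = \<sigma> j then 1 else 0) else (0::complex))"
      by (rule sum.cong) auto
    also have "\<dots> = (if \<sigma> i = \<sigma> j then 1 else 0)" using img[OF that(1)] by simp
    also have "\<dots> = (if i = j then 1 else 0)" using inj that by (auto dest: inj_onD)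
    finally show ?thesis .
  qed
  have c: "(\<Sum>k<n. cnj (if i = \<sigma> k then 1 else 0) * (if j = \<sigma> k then 1 else 0)) = (if i = j then 1 else (0::complex))"
    if "i<n" "j<n" for i j
  proof -
    have "(\<Sum>k<n. cnj (if i = \<sigma> k then 1 else 0) * (if j = \<sigma> k then 1 else 0))
        = (\<Sum>k<n. if k = \<tau> i then (if i = j then 1 else 0) else (0::complex))"
    proof (rule sum.cong[OF refl])
      fix k assume "k \<in> {..<n}"
      then show "cnj (if i = \<sigma> k then 1 else 0) * (if j = \<sigma> k then 1 else 0)
        = (if k = \<tau> i then (if i = j then 1 else 0) else (0::complex))"
        using t3[OF that(1)] t2[OF that(1)] by auto
    qed
    also have "\<dots> = (if i = j then 1 else 0)" using t1[OF that(1)] by simp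
    finally show ?thesis .
  qed
  show ?thesis unfolding unitary_mat_def using r c by auto
qed

lemma label_perm:
  assumes fA: "finite A" and fB: "finite B"
    and cd: "\<And>x. card {a\<in>A. L a = x} = card {b\<in>B. M b = x}"
  shows "\<exists>\<sigma>. bij_betw \<sigma> A B \<and> (\<forall>a\<in>A. M (\<sigma> a) = L a)"
proof -
  have "\<forall>x. \<exists>f. bij_betw f {a\<in>A. L a = x} {b\<in>B. M b = x}"
    using fA fB cd by (intro allI finite_same_card_bij) auto
  then obtain F where F: "\<And>x. bij_betw (F x) {a\<in>A. L a = x} {b\<in>B. M b = x}" by metis
  define \<sigma> where "\<sigma> a = F (L a) a" for a
  have mem: "\<sigma> a \<in> B \<and> M (\<sigma> a) = L a" if "a \<in> A" for a
    using bij_betwE[OF F[of "L a"]] that unfolding \<sigma>_def by auto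
  have "inj_on \<sigma> A"
  proof (rule inj_onI)
    fix a a' assume h: "a \<in> A" "a' \<in> A" "\<sigma> a = \<sigma> a'"
    then have e: "L a = L a'" using mem by metis
    have "F (L a) a = F (L a) a'" using h e unfolding \<sigma>_def by simp
    then show "a = a'"
      using bij_betw_imp_inj_on[OF F[of "L a"]] h e by (auto dest: inj_onD)
  qed
  moreover have "\<sigma> ` A = B"
  proof
    show "\<sigma> ` A \<subseteq> B" using mem by auto
    show "B \<subseteq> \<sigma> ` A"
    proof
      fix b assume b: "b \<in> B"
      then have "b \<in> F (M b) ` {a\<in>A. L a = M b}"
        using bij_betw_imp_surj_on[OF F[of "M b"]] by auto
      then obtain a where a: "a \<in> A" "L a = M b" "b = F (M b) a" by auto
      then have "\<sigma> a = b" unfolding \<sigma>_def by simp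
      then show "b \<in> \<sigma> ` A" using a by auto
    qed
  qed
  ultimately show ?thesis using mem bij_betw_imageI by blast
qed

lemma partition_fun:
  "\<exists>h. (\<forall>a<(\<Sum>j<d. n j). h a < (d::nat)) \<and> (\<forall>j<d. card {a. a < (\<Sum>j<d. n j) \<and> h a = j} = (n j::nat))"
proof (induction d)
  case 0 then show ?case by simp
next
  case (Suc d)
  then obtain h where h1: "\<forall>a<(\<Sum>j<d. n j). h a < d"
    and h2: "\<forall>j<d. card {a. a < (\<Sum>j<d. n j) \<and> h a = j} = n j" by blast
  define S where "S = (\<Sum>j<d. n j)"
  define h' where "h' a = (if a < S then h a else d)" for a
  have sum: "(\<Sum>j<Suc d. n j) = S + n d" unfolding S_def by simp
  have "\<forall>a<(\<Sum>j<Suc d. n j). h' a < Suc d"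
    unfolding sum h'_def using h1 S_def by auto
  moreover have "card {a. a < (\<Sum>j<Suc d. n j) \<and> h' a = j} = n j" if "j < Suc d" for j
  proof (cases "j < d")
    case True
    have "{a. a < (\<Sum>j<Suc d. n j) \<and> h' a = j} = {a. a < S \<and> h a = j}"
      unfolding sum h'_def using True by auto
    then show ?thesis using h2 True S_def by simp
  next
    case False
    then have j: "j = d" using that by simp
    have "{a. a < (\<Sum>j<Suc d. n j) \<and> h' a = j} = {S..<S + n d}"
    proof -
      have "a < S \<Longrightarrow> h a \<noteq> d" for a using h1 S_def by fastforce
      then show ?thesis unfolding sum h'_def j by auto
    qed
    then show ?thesis using j by simp
  qed
  ultimately show ?case by blast
qed


lemma inner_ind:
  assumes "0 < (s::nat)"
  shows "(\<Sum>b<s. (cmod (if j * s + b = q then 1 else 0))\<^sup>2) = (if q div s = j then 1 else (0::real))"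
proof (cases "q div s = j")
  case True
  have "(\<Sum>b<s. (cmod (if j * s + b = q then 1 else 0))\<^sup>2) = (\<Sum>b<s. if b = q mod s then 1 else (0::real))"
  proof (rule sum.cong[OF refl])
    fix b assume b: "b \<in> {..<s}"
    have "(j * s + b = q) = (b = q mod s)"
      using True b dv md by (metis lessThan_iff div_mult_mod_eq mult.commute)
    then show "(cmod (if j * s + b = q then 1 else 0))\<^sup>2 = (if b = q mod s then 1 else (0::real))" by simp
  qed
  also have "\<dots> = 1" using assms by simp
  finally show ?thesis using True by simp
next
  case False
  have "(\<Sum>b<s. (cmod (if j * s + b = q then 1 else 0))\<^sup>2) = (\<Sum>b<s. (0::real))"
  proof (rule sum.cong[OF refl])
    fix b assume b: "b \<in> {..<s}"
    have "j * s + b \<noteq> q" using False b dv by auto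
    then show "(cmod (if j * s + b = q then 1 else 0))\<^sup>2 = (0::real)" by simp
  qed
  then show ?thesis using False by simp
qed

lemma perm_exists:
  fixes N :: "nat \<Rightarrow> nat \<Rightarrow> nat"
  assumes s: "0 < s" and rs: "\<forall>i<d. (\<Sum>j<d. N i j) = s" and cs: "\<forall>j<d. (\<Sum>i<d. N i j) = s"
  shows "\<exists>U. unitary_mat (d * s) U \<and> (\<forall>i<d. \<forall>j<d. block_frob_sq s U i j = real (N i j))"
proof -
  have "\<forall>i. \<exists>h. i<d \<longrightarrow> ((\<forall>a<s. h a < d) \<and> (\<forall>j<d. card {a. a<s \<and> h a = j} = N i j))"
  proof
    fix i
    show "\<exists>h. i<d \<longrightarrow> ((\<forall>a<s. h a < d) \<and> (\<forall>j<d. card {a. a<s \<and> h a = j} = N i j))"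
      using partition_fun[where d=d and n="N i"] rs by (cases "i<d") auto
  qed
  then obtain H where H: "\<And>i. i<d \<Longrightarrow> (\<forall>a<s. H i a < d) \<and> (\<forall>j<d. card {a. a<s \<and> H i a = j} = N i j)"
    by metis
  have "\<forall>j. \<exists>h. j<d \<longrightarrow> ((\<forall>a<s. h a < d) \<and> (\<forall>i<d. card {a. a<s \<and> h a = i} = N i j))"
  proof
    fix j
    show "\<exists>h. j<d \<longrightarrow> ((\<forall>a<s. h a < d) \<and> (\<forall>i<d. card {a. a<s \<and> h a = i} = N i j))"
      using partition_fun[where d=d and n="\<lambda>i. N i j"] cs by (cases "j<d") auto
  qed
  then obtain G where G: "\<And>j. j<d \<Longrightarrow> (\<forall>a<s. G j a < d) \<and> (\<forall>i<d. card {a. a<s \<and> G j a = i} = N i j)"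
    by metis
  define L where "L p = (p div s, H (p div s) (p mod s))" for p
  define M where "M q = (G (q div s) (q mod s), q div s)" for q
  have divlt: "p div s < d" if "p < d * s" for p
    using that by (simp add: less_mult_imp_div_less)
  have modlt: "p mod s < s" for p using s by simp
  have fibL: "card {p\<in>{..<d * s}. L p = (i,j)} = (if i < d \<and> j < d then N i j else 0)" for i j
  proof (cases "i < d")
    case True
    have eq: "{p\<in>{..<d * s}. L p = (i,j)} = (\<lambda>a. i * s + a) ` {a. a<s \<and> H i a = j}"
    proof
      show "{p\<in>{..<d * s}. L p = (i,j)} \<subseteq> (\<lambda>a. i * s + a) ` {a. a<s \<and> H i a = j}"
      proof
        fix p assume "p \<in> {p\<in>{..<d * s}. L p = (i,j)}"
        then have p: "p div s = i" "H i (p mod s) = j" unfolding L_def by auto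
        have "p = i * s + p mod s" using p(1) by (metis div_mult_mod_eq)
        then show "p \<in> (\<lambda>a. i * s + a) ` {a. a<s \<and> H i a = j}" using p modlt by blast
      qed
      show "(\<lambda>a. i * s + a) ` {a. a<s \<and> H i a = j} \<subseteq> {p\<in>{..<d * s}. L p = (i,j)}"
        using True idx_lt dv md unfolding L_def by auto
    qed
    have "card {p\<in>{..<d * s}. L p = (i,j)} = card {a. a<s \<and> H i a = j}"
      unfolding eq by (rule card_image) (auto simp: inj_on_def)
    moreover have "j \<ge> d \<Longrightarrow> {a. a<s \<and> H i a = j} = {}" using H[OF True] by fastforce
    ultimately show ?thesis using H[OF True] True by auto
  next
    case False
    have "{p\<in>{..<d * s}. L p = (i,j)} = {}" using False divlt unfolding L_def by fastforce
    then show ?thesis using False by simp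
  qed
  have fibM: "card {p\<in>{..<d * s}. M p = (i,j)} = (if i < d \<and> j < d then N i j else 0)" for i j
  proof (cases "j < d")
    case True
    have eq: "{p\<in>{..<d * s}. M p = (i,j)} = (\<lambda>a. j * s + a) ` {a. a<s \<and> G j a = i}"
    proof
      show "{p\<in>{..<d * s}. M p = (i,j)} \<subseteq> (\<lambda>a. j * s + a) ` {a. a<s \<and> G j a = i}"
      proof
        fix p assume "p \<in> {p\<in>{..<d * s}. M p = (i,j)}"
        then have p: "p div s = j" "G j (p mod s) = i" unfolding M_def by auto
        have "p = j * s + p mod s" using p(1) by (metis div_mult_mod_eq)
        then show "p \<in> (\<lambda>a. j * s + a) ` {a. a<s \<and> G j a = i}" using p modlt by blast
      qed
      show "(\<lambda>a. j * s + a) ` {a. a<s \<and> G j a = i} \<subseteq> {p\<in>{..<d * s}. M p = (i,j)}"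
        using True idx_lt dv md unfolding M_def by auto
    qed
    have "card {p\<in>{..<d * s}. M p = (i,j)} = card {a. a<s \<and> G j a = i}"
      unfolding eq by (rule card_image) (auto simp: inj_on_def)
    moreover have "i \<ge> d \<Longrightarrow> {a. a<s \<and> G j a = i} = {}" using G[OF True] by fastforce
    ultimately show ?thesis using G[OF True] True by auto
  next
    case False
    have "{p\<in>{..<d * s}. M p = (i,j)} = {}" using False divlt unfolding M_def by fastforce
    then show ?thesis using False by simp
  qed
  have "\<exists>\<sigma>. bij_betw \<sigma> {..<d * s} {..<d * s} \<and> (\<forall>a\<in>{..<d * s}. M (\<sigma> a) = L a)"
  proof (rule label_perm)
    fix x :: "nat \<times> nat"
    obtain i j where x: "x = (i,j)" by fastforce
    show "card {a\<in>{..<d * s}. L a = x} = card {b\<in>{..<d * s}. M b = x}"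
      unfolding x fibL fibM ..
  qed auto
  then obtain \<sigma> where bij: "bij_betw \<sigma> {..<d * s} {..<d * s}"
    and lab: "\<And>a. a < d * s \<Longrightarrow> M (\<sigma> a) = L a" by auto
  define U where "U = (\<lambda>p q. if q = \<sigma> p then 1 else (0::complex))"
  have U: "unitary_mat (d * s) U" unfolding U_def by (rule perm_unitary[OF bij])
  have "block_frob_sq s U i j = real (N i j)" if ij: "i<d" "j<d" for i j
  proof -
    have "block_frob_sq s U i j = (\<Sum>a<s. if \<sigma> (i * s + a) div s = j then 1 else (0::real))"
      unfolding block_frob_sq_def U_def using inner_ind[OF s] by simp
    also have "\<dots> = (\<Sum>a<s. if H i a = j then 1 else (0::real))"
    proof (rule sum.cong[OF refl])
      fix a assume a: "a \<in> {..<s}"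
      have "M (\<sigma> (i * s + a)) = L (i * s + a)" using lab idx_lt ij a by simp
      then have "\<sigma> (i * s + a) div s = H i a" unfolding M_def L_def using a dv md by simp
      then show "(if \<sigma> (i * s + a) div s = j then 1 else (0::real)) = (if H i a = j then 1 else 0)"
        by simp
    qed
    also have "\<dots> = real (card {a. a<s \<and> H i a = j})" by (rule sum_ind_card)
    also have "\<dots> = real (N i j)" using H ij by simp
    finally show ?thesis .
  qed
  then show ?thesis using U by blast
qed



lemma tendsto_fun_iff:
  "((f :: 'a \<Rightarrow> 'b \<Rightarrow> 'c::topological_space) \<longlongrightarrow> l) F \<longleftrightarrow> (\<forall>i. ((\<lambda>x. f x i) \<longlongrightarrow> l i) F)"
  using limitin_componentwise[of "\<lambda>i. euclidean" UNIV f l F]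
  by (simp add: euclidean_product_topology)

lemma cont_entry: "continuous_on UNIV (\<lambda>B::nat \<Rightarrow> nat \<Rightarrow> real. B i j)"
  by (rule continuous_on_product_then_coordinatewise) simp

lemma closed_bist: "closed (bistochastic d)"
proof -
  have e: "bistochastic d = {B. \<forall>i j. (d \<le> i \<or> d \<le> j) \<longrightarrow> B i j = 0}
      \<inter> {B. \<forall>i j. (i < d \<and> j < d) \<longrightarrow> 0 \<le> B i j}
      \<inter> {B. \<forall>i. i < d \<longrightarrow> (\<Sum>j<d. B i j) = 1}
      \<inter> {B. \<forall>j. j < d \<longrightarrow> (\<Sum>i<d. B i j) = 1}"
    unfolding bistochastic_def by auto
  show ?thesis unfolding e
    by (intro closed_Inter closed_Int closed_Collect_all closed_Collect_imp closed_Collect_eq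
        closed_Collect_le continuous_on_sum cont_entry continuous_on_const open_Collect_const)
qed

lemma rat_in_U:
  fixes N :: "nat \<Rightarrow> nat \<Rightarrow> nat"
  assumes s: "0 < s" and rs: "\<forall>i<d. (\<Sum>j<d. N i j) = s" and cs: "\<forall>j<d. (\<Sum>i<d. N i j) = s"
  shows "(\<lambda>i j. if i<d \<and> j<d then real (N i j) / real s else 0) \<in> U_set d s"
proof -
  obtain U where U: "unitary_mat (d * s) U" and b: "\<forall>i<d. \<forall>j<d. block_frob_sq s U i j = real (N i j)"
    using perm_exists[OF s rs cs] by blast
  have "phi d s U = (\<lambda>i j. if i<d \<and> j<d then real (N i j) / real s else 0)"
    unfolding phi_def using b by (intro ext) auto
  then show ?thesis unfolding U_set_def using U by (metis (mono_tags) imageI mem_Collect_eq)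
qed


lemma round_approx:
  assumes B: "B \<in> bistochastic d" and t: "0 < t"
  shows "\<exists>s N. 0 < s \<and> (\<forall>i<d. (\<Sum>j<d. N i j) = s) \<and> (\<forall>j<d. (\<Sum>i<d. N i j) = (s::nat)) \<and>
     (\<forall>i<d. \<forall>j<d. \<bar>real (N i j) / real s - B i j\<bar> \<le> (real d + 1) / real t)"
proof -
  have Bnn: "0 \<le> B i j" if "i<d" "j<d" for i j using B that unfolding bistochastic_def by auto
  have Brs: "(\<Sum>j<d. B i j) = 1" if "i<d" for i using B that unfolding bistochastic_def by auto
  have Bcs: "(\<Sum>i<d. B i j) = 1" if "j<d" for j using B that unfolding bistochastic_def by auto
  define F where "F i j = nat \<lfloor>real t * B i j\<rfloor>" for i j
  have F1: "real (F i j) \<le> real t * B i j" and F2: "real t * B i j < real (F i j) + 1"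
    if "i<d" "j<d" for i j
  proof -
    have "0 \<le> real t * B i j" using Bnn[OF that] by simp
    then have "real (F i j) = of_int \<lfloor>real t * B i j\<rfloor>" unfolding F_def by simp
    then show "real (F i j) \<le> real t * B i j" "real t * B i j < real (F i j) + 1"
      by linarith+
  qed
  define r where "r i = t - (\<Sum>j<d. F i j)" for i
  define c where "c j = t - (\<Sum>i<d. F i j)" for j
  have Rle: "(\<Sum>j<d. F i j) \<le> t" if "i<d" for i
  proof -
    have "real (\<Sum>j<d. F i j) \<le> (\<Sum>j<d. real t * B i j)"
      unfolding of_nat_sum using F1 that by (intro sum_mono) auto
    also have "\<dots> = real t" using Brs[OF that] by (simp flip: sum_distrib_left)
    finally have "real (\<Sum>j<d. F i j) \<le> real t" .
    then show ?thesis by (simp only: of_nat_le_iff)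
  qed
  have Cle: "(\<Sum>i<d. F i j) \<le> t" if "j<d" for j
  proof -
    have "real (\<Sum>i<d. F i j) \<le> (\<Sum>i<d. real t * B i j)"
      unfolding of_nat_sum using F1 that by (intro sum_mono) auto
    also have "\<dots> = real t" using Bcs[OF that] by (simp flip: sum_distrib_left)
    finally have "real (\<Sum>i<d. F i j) \<le> real t" .
    then show ?thesis by (simp only: of_nat_le_iff)
  qed
  have rreal: "real (r i) = real t - (\<Sum>j<d. real (F i j))" if "i<d" for i
    unfolding r_def using Rle[OF that] by (simp add: of_nat_diff)
  have creal: "real (c j) = real t - (\<Sum>i<d. real (F i j))" if "j<d" for j
    unfolding c_def using Cle[OF that] by (simp add: of_nat_diff)
  have rle: "real (r i) \<le> real d" if "i<d" for i
  proof -
    have "(\<Sum>j<d. real t * B i j) \<le> (\<Sum>j<d. real (F i j) + 1)"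
      using F2 that by (intro sum_mono) (auto intro: less_imp_le)
    moreover have "(\<Sum>j<d. real t * B i j) = real t" using Brs[OF that] by (simp flip: sum_distrib_left)
    ultimately show ?thesis using rreal[OF that] by (simp add: sum.distrib)
  qed
  define D where "D = (\<Sum>i<d. r i)"
  have Dc: "D = (\<Sum>j<d. c j)"
  proof -
    have "real D = (\<Sum>i<d. real t - (\<Sum>j<d. real (F i j)))"
      unfolding D_def of_nat_sum using rreal by (intro sum.cong) auto
    also have "\<dots> = real d * real t - (\<Sum>i<d. \<Sum>j<d. real (F i j))"
      by (simp add: sum_subtractf)
    also have "\<dots> = real d * real t - (\<Sum>j<d. \<Sum>i<d. real (F i j))"
      by (subst sum.swap) simp
    also have "\<dots> = (\<Sum>j<d. real t - (\<Sum>i<d. real (F i j)))"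
      by (simp add: sum_subtractf)
    also have "\<dots> = real (\<Sum>j<d. c j)"
      unfolding of_nat_sum using creal by (intro sum.cong) auto
    finally show ?thesis by linarith
  qed
  have cleD: "c j \<le> D" if "j<d" for j
    unfolding Dc using that by (intro member_le_sum) auto
  show ?thesis
  proof (cases "D = 0")
    case True
    have r0: "r i = 0" if "i<d" for i using True that unfolding D_def by simp
    have c0: "c j = 0" if "j<d" for j using cleD[OF that] True by simp
    have rs0: "(\<Sum>j<d. F i j) = t" if "i<d" for i using r0[OF that] Rle[OF that] unfolding r_def by linarith
    have cs0: "(\<Sum>i<d. F i j) = t" if "j<d" for j using c0[OF that] Cle[OF that] unfolding c_def by linarith
    have "(\<forall>i<d. (\<Sum>j<d. F i j) = t) \<and> (\<forall>j<d. (\<Sum>i<d. F i j) = t)"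
      using rs0 cs0 by blast
    moreover have "\<bar>real (F i j) / real t - B i j\<bar> \<le> (real d + 1) / real t" if "i<d" "j<d" for i j
    proof -
      have "\<bar>real (F i j) - real t * B i j\<bar> \<le> 1" using F1[OF that] F2[OF that] by linarith
      also have "\<dots> \<le> real d + 1" by simp
      finally have "\<bar>real (F i j) - real t * B i j\<bar> \<le> real d + 1" .
      then have "\<bar>real (F i j) - real t * B i j\<bar> / real t \<le> (real d + 1) / real t"
        by (rule divide_right_mono) simp
      moreover have "(real (F i j) - real t * B i j) / real t = real (F i j) / real t - B i j"
        using t by (simp add: diff_divide_distrib)
      moreover have "\<bar>real (F i j) - real t * B i j\<bar> / real t = \<bar>(real (F i j) - real t * B i j) / real t\<bar>"
        by (rule abs_div_pos) (use t in simp)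
      ultimately show ?thesis by simp
    qed
    ultimately show ?thesis using t by (intro exI[of _ t] exI[of _ F]) auto
  next
    case False
    define N where "N i j = D * F i j + r i * c j" for i j
    have "\<forall>i<d. (\<Sum>j<d. N i j) = t * D"
    proof (intro allI impI)
      fix i assume i: "i<d"
      have "(\<Sum>j<d. N i j) = D * (\<Sum>j<d. F i j) + r i * D"
        unfolding N_def Dc by (simp add: sum.distrib sum_distrib_left)
      also have "\<dots> = D * ((\<Sum>j<d. F i j) + r i)" by (simp add: algebra_simps)
      also have "\<dots> = t * D" using Rle[OF i] unfolding r_def by simp
      finally show "(\<Sum>j<d. N i j) = t * D" .
    qed
    moreover have "\<forall>j<d. (\<Sum>i<d. N i j) = t * D"
    proof (intro allI impI)
      fix j assume j: "j<d"
      have "(\<Sum>i<d. N i j) = D * (\<Sum>i<d. F i j) + D * c j"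
        unfolding N_def D_def by (simp add: sum.distrib sum_distrib_left sum_distrib_right)
      also have "\<dots> = D * ((\<Sum>i<d. F i j) + c j)" by (simp add: algebra_simps)
      also have "\<dots> = t * D" using Cle[OF j] unfolding c_def by simp
      finally show "(\<Sum>i<d. N i j) = t * D" .
    qed
    moreover have "\<bar>real (N i j) / real (t * D) - B i j\<bar> \<le> (real d + 1) / real t" if "i<d" "j<d" for i j
    proof -
      have Dp: "0 < real D" using False by simp
      have tp: "0 < real t" using t by simp
      have e: "real (N i j) / real (t * D) - B i j
          = (real (F i j) - real t * B i j) / real t + real (r i) * real (c j) / (real t * real D)"
        unfolding N_def using Dp tp by (simp add: field_simps)
      have a1: "\<bar>real (F i j) - real t * B i j\<bar> \<le> 1" using F1[OF that] F2[OF that] by linarith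
      have "real (r i) * real (c j) \<le> real d * real D"
        using rle[OF that(1)] cleD[OF that(2)] by (intro mult_mono) auto
      then have a2: "real (r i) * real (c j) / (real t * real D) \<le> real d / real t"
        using Dp tp by (simp add: field_simps)
      have a3: "0 \<le> real (r i) * real (c j) / (real t * real D)" by simp
      have "\<bar>real (F i j) - real t * B i j\<bar> / real t \<le> 1 / real t"
        by (rule divide_right_mono[OF a1]) (use tp in simp)
      then have "\<bar>(real (F i j) - real t * B i j) / real t\<bar> \<le> 1 / real t"
        using abs_div_pos[OF tp, of "real (F i j) - real t * B i j"] by metis
      then have "\<bar>real (N i j) / real (t * D) - B i j\<bar> \<le> 1 / real t + real d / real t"
        unfolding e using a2 a3 by linarith
      also have "\<dots> = (real d + 1) / real t" by (simp add: add_divide_distrib)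
      finally show ?thesis .
    qed
    ultimately show ?thesis using t False by (intro exI[of _ "t * D"] exI[of _ N]) auto
  qed
qed


theorem proposition3p12:
  fixes d s :: nat
  assumes "2 \<le> d" and "1 \<le> s"
  shows "U_set d s \<subseteq> L_set d s \<and> L_set d s \<subseteq> bistochastic d
         \<and> closure (\<Union>t\<in>{1..}. L_set d t) = bistochastic d"
proof -
  have part1: "U_set d s \<subseteq> L_set d s" by (rule U_sub_L[OF assms(2)])
  have Lb: "L_set d t \<subseteq> bistochastic d" for t unfolding L_set_def by auto
  have sub: "closure (\<Union>t\<in>{1..}. L_set d t) \<subseteq> bistochastic d"
    by (rule closure_minimal) (use Lb closed_bist in auto)
  have sup: "bistochastic d \<subseteq> closure (\<Union>t\<in>{1..}. L_set d t)"
  proof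
    fix B assume B: "B \<in> bistochastic d"
    have "\<forall>n. \<exists>M. M \<in> (\<Union>t\<in>{1..}. L_set d t) \<and>
        (\<forall>i<d. \<forall>j<d. \<bar>M i j - B i j\<bar> \<le> (real d + 1) / real (Suc n))"
    proof
      fix n
      obtain s' N where s': "0 < s'" and rs: "\<forall>i<d. (\<Sum>j<d. N i j) = s'"
        and cs: "\<forall>j<d. (\<Sum>i<d. N i j) = s'"
        and err: "\<forall>i<d. \<forall>j<d. \<bar>real (N i j) / real s' - B i j\<bar> \<le> (real d + 1) / real (Suc n)"
        using round_approx[OF B, of "Suc n"] by auto
      define M where "M = (\<lambda>i j. if i<d \<and> j<d then real (N i j) / real s' else 0)"
      have "M \<in> U_set d s'" unfolding M_def by (rule rat_in_U[OF s' rs cs])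
      then have "M \<in> L_set d s'" using U_sub_L[of s' d] s' by auto
      then have "M \<in> (\<Union>t\<in>{1..}. L_set d t)" using s' by auto
      moreover have "\<forall>i<d. \<forall>j<d. \<bar>M i j - B i j\<bar> \<le> (real d + 1) / real (Suc n)"
        using err unfolding M_def by simp
      ultimately show "\<exists>M. M \<in> (\<Union>t\<in>{1..}. L_set d t) \<and>
        (\<forall>i<d. \<forall>j<d. \<bar>M i j - B i j\<bar> \<le> (real d + 1) / real (Suc n))" by blast
    qed
    then obtain Ms where Ms1: "\<And>n. Ms n \<in> (\<Union>t\<in>{1..}. L_set d t)"
      and Ms2: "\<And>n i j. i<d \<Longrightarrow> j<d \<Longrightarrow> \<bar>Ms n i j - B i j\<bar> \<le> (real d + 1) / real (Suc n)"
      by metis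
    have Msb: "Ms n \<in> bistochastic d" for n using Ms1[of n] Lb by auto
    have lim: "\<forall>i j. (\<lambda>n. Ms n i j) \<longlonglongrightarrow> B i j"
    proof (intro allI)
      fix i j
      show "(\<lambda>n. Ms n i j) \<longlonglongrightarrow> B i j"
      proof (cases "i<d \<and> j<d")
        case True
        have "(\<lambda>n. Ms n i j - B i j) \<longlonglongrightarrow> 0"
        proof (rule Lim_null_comparison)
          show "\<forall>\<^sub>F n in sequentially. norm (Ms n i j - B i j) \<le> (real d + 1) * inverse (real (Suc n))"
            using Ms2 True by (simp add: divide_inverse)
          show "(\<lambda>n. (real d + 1) * inverse (real (Suc n))) \<longlonglongrightarrow> 0"
            using tendsto_mult[OF tendsto_const LIMSEQ_inverse_real_of_nat, of "real d + 1"] by simp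
        qed
        then show ?thesis by (rule LIM_zero_cancel)
      next
        case False
        then have "Ms n i j = 0" "B i j = 0" for n using Msb[of n] B unfolding bistochastic_def by auto
        then show ?thesis by simp
      qed
    qed
    have "Ms \<longlonglongrightarrow> B" by (simp only: tendsto_fun_iff) (use lim in blast)
    then show "B \<in> closure (\<Union>t\<in>{1..}. L_set d t)"
      by (rule closed_sequentially[OF closed_closure, rotated]) (use Ms1 closure_subset in blast)
  qed
  show ?thesis using part1 Lb sub sup by blast
qed

end
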